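(* Let $\mathbb X$ be a separable reflexive Banach space, let $\mu\in\mathbb X$, and let $\hat\mu_1,\ldots,\hat\mu_k$ be independent random elements of $\mathbb X$. Fix $\alpha\in(0,\tfrac12)$. Let $0<p<\alpha$ and $\varepsilon>0$ be such that $$\Pr\big(\|\hat\mu_j-\mu\|>\varepsilon\big)\le p\quad\text{for all }1\le j\le k.$$ Let $\hat\mu=\mathrm{med}(\hat\mu_1,\ldots,\hat\mu_k)$. Then $$\Pr\big(\|\hat\mu-\mu\|>C_\alpha\varepsilon\big)\le e^{-k\psi(\alpha;p)}.$$ Here $C_\alpha=\frac{2(1-\alpha)}{1-2\alpha}$ in general, and $C_\alpha=(1-\alpha)\sqrt{\frac1{1-2\alpha}}$ when $\mathbb X$ is a Hilbert space.
   Context: $\mathrm{med}(x_1,\ldots,x_k)$ denotes a geometric median, i.e. any minimizer over $y\in\mathbb X$ of $\sum_{j=1}^k\|y-x_j\|$. For $0<p<\alpha<\tfrac12$, $$\psi(\alpha;p)=(1-\alpha)\log\frac{1-\alpha}{1-p}+\alpha\log\frac{\alpha}{p}.$$ *)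

theory Defs
  imports "HOL-Analysis.Analysis" "HOL-Probability.Probability"
begin

definition canonical_bidual :: "'a::real_normed_vector \<Rightarrow> (('a \<Rightarrow>\<^sub>L real) \<Rightarrow>\<^sub>L real)" where
  "canonical_bidual x = Blinfun (\<lambda>f. blinfun_apply f x)"

definition reflexive_space :: "'a::real_normed_vector itself \<Rightarrow> bool" where
  "reflexive_space (_::'a itself) \<longleftrightarrow> surj (canonical_bidual :: 'a \<Rightarrow> _)"

text \<open>The norm of the space is induced by an inner product (i.e. the space is a Hilbert space,
  completeness being given by the banach class).\<close>
definition hilbert_norm :: "'a::real_normed_vector itself \<Rightarrow> bool" where
  "hilbert_norm (_::'a itself) \<longleftrightarrow>
     (\<exists>ip :: 'a \<Rightarrow> 'a \<Rightarrow> real.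
        (\<forall>x y. ip x y = ip y x) \<and>
        (\<forall>y. linear (\<lambda>x. ip x y)) \<and>
        (\<forall>x. x \<noteq> 0 \<longrightarrow> ip x x > 0) \<and>
        (\<forall>x. norm x = sqrt (ip x x)))"

definition is_geometric_median :: "nat \<Rightarrow> (nat \<Rightarrow> 'a::real_normed_vector) \<Rightarrow> 'a \<Rightarrow> bool" where
  "is_geometric_median k x y \<longleftrightarrow>
     (\<forall>z. (\<Sum>j\<in>{1..k}. norm (y - x j)) \<le> (\<Sum>j\<in>{1..k}. norm (z - x j)))"

definition psi :: "real \<Rightarrow> real \<Rightarrow> real" where
  "psi \<alpha> p = (1 - \<alpha>) * ln ((1 - \<alpha>) / (1 - p)) + \<alpha> * ln (\<alpha> / p)"

end

theory Submission
  imports Defs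
begin


lemma sum_if_card:
  fixes A :: "nat set" assumes "finite A"
  shows "(\<Sum>j\<in>A. if P j then (a::real) else b) = real (card {j\<in>A. P j}) * a + real (card {j\<in>A. \<not> P j}) * b"
proof -
  have "(\<Sum>j\<in>A. if P j then (a::real) else b) = (\<Sum>j\<in>A \<inter> {x. P x}. a) + (\<Sum>j\<in>A \<inter> - {x. P x}. b)"
    by (rule sum.If_cases[OF assms])
  also have "A \<inter> {x. P x} = {j\<in>A. P j}" by auto
  also have "A \<inter> - {x. P x} = {j\<in>A. \<not> P j}" by auto
  finally show ?thesis by simp
qed

lemma card_split:
  fixes A :: "nat set" assumes "finite A"
  shows "card {j\<in>A. P j} + card {j\<in>A. \<not> P j} = card A"
proof -
  have "{j\<in>A. P j} \<union> {j\<in>A. \<not> P j} = A" by auto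
  moreover have "{j\<in>A. P j} \<inter> {j\<in>A. \<not> P j} = {}" by auto
  ultimately show ?thesis using assms card_Un_disjoint[of "{j\<in>A. P j}" "{j\<in>A. \<not> P j}"]
    by (metis (no_types, lifting) finite_Un)
qed

lemma geo_general:
  fixes x :: "nat \<Rightarrow> 'a::real_normed_vector" and z mu :: 'a
  assumes med: "is_geometric_median k x z" and r: "r > 0" and a: "0 < \<alpha>" "\<alpha> < 1/2"
    and d: "norm (z - mu) > (2 * (1 - \<alpha>) / (1 - 2 * \<alpha>)) * r"
  shows "\<alpha> * real k \<le> real (card {j\<in>{1..k}. r < norm (x j - mu)})"
proof (rule ccontr)
  define B where "B = real (card {j\<in>{1..k}. r < norm (x j - mu)})"
  define G where "G = real (card {j\<in>{1..k}. \<not> r < norm (x j - mu)})"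
  define dd where "dd = norm (z - mu)"
  assume "\<not> \<alpha> * real k \<le> real (card {j\<in>{1..k}. r < norm (x j - mu)})"
  hence Bk: "B < \<alpha> * real k" by (simp add: B_def)
  have GB0: "card {j\<in>{1..k}. r < norm (x j - mu)} + card {j\<in>{1..k}. \<not> r < norm (x j - mu)} = k"
    using card_split[of "{1..k}" "\<lambda>j. r < norm (x j - mu)"] by simp
  have GB: "G + B = real k" unfolding G_def B_def using GB0 by (simp flip: of_nat_add)
  have le: "(\<Sum>j\<in>{1..k}. norm (z - x j)) \<le> (\<Sum>j\<in>{1..k}. norm (mu - x j))"
    using med unfolding is_geometric_median_def by blast
  have pt: "norm (mu - x j) + (if r < norm (x j - mu) then - dd else dd - 2 * r) \<le> norm (z - x j)" for j
  proof (cases "r < norm (x j - mu)")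
    case True
    have "norm (mu - x j) \<le> norm (mu - z) + norm (z - x j)" using norm_triangle_ineq[of "mu - z" "z - x j"] by simp
    then show ?thesis using True by (simp add: dd_def norm_minus_commute)
  next
    case False
    have "norm (z - mu) \<le> norm (z - x j) + norm (x j - mu)" using norm_triangle_ineq[of "z - x j" "x j - mu"] by simp
    then show ?thesis using False by (simp add: dd_def norm_minus_commute)
  qed
  have "(\<Sum>j\<in>{1..k}. norm (mu - x j) + (if r < norm (x j - mu) then - dd else dd - 2 * r)) \<le> (\<Sum>j\<in>{1..k}. norm (z - x j))"
    by (rule sum_mono) (rule pt)
  also note le
  finally have "(\<Sum>j\<in>{1..k}. (if r < norm (x j - mu) then - dd else dd - 2 * r)) \<le> 0"
    by (simp add: sum.distrib)
  hence key: "B * (- dd) + G * (dd - 2 * r) \<le> 0"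
    by (simp add: sum_if_card B_def G_def)
  have c: "1 - 2 * \<alpha> > 0" using a by simp
  have dC: "dd * (1 - 2 * \<alpha>) > 2 * (1 - \<alpha>) * r" using d c unfolding dd_def
    by (simp add: pos_divide_less_eq mult.commute)
  have B0: "B \<ge> 0" by (simp add: B_def)
  have "\<alpha> * real k \<le> (1/2) * real k" using a by (intro mult_right_mono) auto
  hence "real k - 2 * B > 0" using Bk a B0 by linarith
  have "dd * (G - B) \<le> 2 * r * G" using key by (simp add: algebra_simps)
  moreover have "G = real k - B" using GB by simp
  ultimately have "dd * (real k - 2*B) \<le> 2 * r * (real k - B)" by (simp add: algebra_simps)
  hence "dd * (real k - 2*B) * (1 - 2 * \<alpha>) \<le> 2 * r * (real k - B) * (1 - 2*\<alpha>)"
    using c by (intro mult_right_mono) auto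
  moreover have "2 * (1 - \<alpha>) * r * (real k - 2*B) < dd * (1 - 2 * \<alpha>) * (real k - 2*B)"
    using dC \<open>real k - 2 * B > 0\<close> by (simp add: mult_strict_right_mono)
  ultimately have "2 * (1 - \<alpha>) * r * (real k - 2*B) < 2 * r * (real k - B) * (1 - 2*\<alpha>)"
    by (simp add: algebra_simps)
  hence "0 < 2 * r * (B - \<alpha> * real k)" by (simp add: algebra_simps)
  moreover have "2 * r * (B - \<alpha> * real k) < 0" using r Bk by (simp add: mult_pos_neg)
  ultimately show False by simp
qed


lemma sqrt_bound:
  fixes A h :: real assumes "A > 0" "A\<^sup>2 + h \<ge> 0"
  shows "sqrt (A\<^sup>2 + h) \<le> A + h / (2 * A)"
proof -
  have nn: "A + h / (2*A) \<ge> 0"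
  proof -
    have "A*A > 0" using assms by simp
    moreover have "A*A + h \<ge> 0" using assms(2) by (simp add: power2_eq_square)
    moreover have "2*A*A + h = A*A + (A*A + h)" by simp
    ultimately have "2*A*A + h \<ge> 0" by linarith
    hence "(2*A*A + h) / (2*A) \<ge> 0" using assms by simp
    moreover have "(2*A*A + h) / (2*A) = A + h/(2*A)" using assms by (simp add: field_simps)
    ultimately show ?thesis by simp
  qed
  have "(A + h/(2*A))\<^sup>2 = A\<^sup>2 + h + (h/(2*A))\<^sup>2" using assms by (simp add: power2_eq_square field_simps)
  hence "A\<^sup>2 + h \<le> (A + h/(2*A))\<^sup>2" by simp
  thus ?thesis using nn by (metis real_le_lsqrt assms(2))
qed

lemma geo_hilbert:
  fixes x :: "nat \<Rightarrow> 'a::real_normed_vector" and z mu :: 'a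
  assumes H: "hilbert_norm TYPE('a)"
    and med: "is_geometric_median k x z" and r: "r > 0" and a: "0 < \<alpha>" "\<alpha> < 1/2"
    and d: "norm (z - mu) > ((1 - \<alpha>) * sqrt (1 / (1 - 2 * \<alpha>))) * r"
  shows "\<alpha> * real k \<le> real (card {j\<in>{1..k}. r < norm (x j - mu)})"
proof (rule ccontr)
  obtain ip :: "'a \<Rightarrow> 'a \<Rightarrow> real" where sym: "\<And>x y. ip x y = ip y x"
    and lin: "\<And>y. linear (\<lambda>x. ip x y)" and ppos: "\<And>x. x \<noteq> 0 \<Longrightarrow> ip x x > 0" and nrm: "\<And>x. norm x = sqrt (ip x x)"
    using H unfolding hilbert_norm_def by blast
  have addL: "ip (u + v) w = ip u w + ip v w" for u v w using linear_add[OF lin[of w]] by simp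
  have scL: "ip (c *\<^sub>R u) w = c * ip u w" for c u w using linear_scale[OF lin[of w]] by simp
  have addR: "ip w (u + v) = ip w u + ip w v" for u v w using addL sym by metis
  have scR: "ip w (c *\<^sub>R u) = c * ip w u" for c u w using scL sym by metis
  have minL: "ip (- u) w = - ip u w" for u w using scL[of "-1" u w] by simp
  have minR: "ip w (- u) = - ip w u" for u w using scR[of w "-1" u] by simp
  have pos: "ip u u \<ge> 0" for u
  proof -
    have "ip (0::'a) 0 = 0" using scL[of 0 0 0] by simp
    thus ?thesis using ppos[of u] by (cases "u = 0") auto
  qed
  have nsq: "(norm u)\<^sup>2 = ip u u" for u using nrm[of u] pos[of u] by simp
  have exp2: "ip (u + v) (u + v) = ip u u + 2 * ip u v + ip v v" for u v
    by (simp add: addL addR sym[of v u])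

  define B where "B = real (card {j\<in>{1..k}. r < norm (x j - mu)})"
  define G where "G = real (card {j\<in>{1..k}. \<not> r < norm (x j - mu)})"
  define dd where "dd = norm (z - mu)"
  define w where "w = mu - z"
  assume "\<not> \<alpha> * real k \<le> real (card {j\<in>{1..k}. r < norm (x j - mu)})"
  hence Bk: "B < \<alpha> * real k" by (simp add: B_def)
  have GB0: "card {j\<in>{1..k}. r < norm (x j - mu)} + card {j\<in>{1..k}. \<not> r < norm (x j - mu)} = k"
    using card_split[of "{1..k}" "\<lambda>j. r < norm (x j - mu)"] by simp
  have GB: "G + B = real k" unfolding G_def B_def using GB0 by (simp flip: of_nat_add)
  have c: "1 - 2 * \<alpha> > 0" using a by simp
  have C0: "(1 - \<alpha>) * sqrt (1 / (1 - 2 * \<alpha>)) \<ge> 1"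
  proof -
    have "(1-\<alpha>)\<^sup>2 \<ge> 1 - 2*\<alpha>" by (simp add: power2_eq_square algebra_simps)
    hence "(1-\<alpha>)\<^sup>2 * (1 / (1 - 2 * \<alpha>)) \<ge> 1" using c by (simp add: field_simps)
    hence "sqrt ((1-\<alpha>)\<^sup>2 * (1 / (1 - 2 * \<alpha>))) \<ge> 1" by simp
    moreover have "sqrt ((1-\<alpha>)\<^sup>2 * (1 / (1 - 2 * \<alpha>))) = (1-\<alpha>) * sqrt (1 / (1 - 2 * \<alpha>))"
      unfolding real_sqrt_mult using a by simp
    ultimately show ?thesis by linarith
  qed
  have dr: "dd > r" using d C0 r unfolding dd_def
    by (smt (verit, best) mult_le_cancel_right1)
  have nw: "norm w = dd" by (simp add: w_def dd_def norm_minus_commute)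
  have ww: "ip w w = dd\<^sup>2" using nsq[of w] nw by simp
  \<comment> \<open>first order condition\<close>
  define S1 where "S1 = (\<Sum>j\<in>{1..k}. if r < norm (x j - mu) then dd else ip (z - x j) w / norm (z - x j))"
  define S2 where "S2 = (\<Sum>j\<in>{1..k}. if r < norm (x j - mu) then 0 else dd\<^sup>2 / (2 * norm (z - x j)))"
  have S2nn: "S2 \<ge> 0" unfolding S2_def by (intro sum_nonneg) auto
  have step: "0 \<le> t * S1 + t\<^sup>2 * S2" if t: "t > 0" for t
  proof -
    have pt: "norm (z + t *\<^sub>R w - x j) \<le> norm (z - x j) +
       (t * (if r < norm (x j - mu) then dd else ip (z - x j) w / norm (z - x j))
        + t\<^sup>2 * (if r < norm (x j - mu) then 0 else dd\<^sup>2 / (2 * norm (z - x j))))" for j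
    proof (cases "r < norm (x j - mu)")
      case True
      have "norm (z + t *\<^sub>R w - x j) = norm ((z - x j) + t *\<^sub>R w)" by (simp add: algebra_simps)
      also have "\<dots> \<le> norm (z - x j) + norm (t *\<^sub>R w)" by (rule norm_triangle_ineq)
      finally show ?thesis using True t nw by simp
    next
      case False
      define A where "A = norm (z - x j)"
      have "dd \<le> norm (z - x j) + norm (x j - mu)" unfolding dd_def
        using norm_triangle_ineq[of "z - x j" "x j - mu"] by simp
      hence A0: "A > 0" using False dr unfolding A_def by linarith
      have "norm (z + t *\<^sub>R w - x j) = norm ((z - x j) + t *\<^sub>R w)" by (simp add: algebra_simps)
      also have "\<dots> = sqrt (ip ((z - x j) + t *\<^sub>R w) ((z - x j) + t *\<^sub>R w))" by (rule nrm)
      also have "ip ((z - x j) + t *\<^sub>R w) ((z - x j) + t *\<^sub>R w) = A\<^sup>2 + (2 * t * ip (z - x j) w + t\<^sup>2 * dd\<^sup>2)"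
        unfolding exp2 A_def nsq by (simp add: scL scR ww power2_eq_square algebra_simps)
      also have "sqrt (A\<^sup>2 + (2 * t * ip (z - x j) w + t\<^sup>2 * dd\<^sup>2)) \<le> A + (2 * t * ip (z - x j) w + t\<^sup>2 * dd\<^sup>2) / (2 * A)"
      proof (rule sqrt_bound[OF A0])
        show "0 \<le> A\<^sup>2 + (2 * t * ip (z - x j) w + t\<^sup>2 * dd\<^sup>2)"
          using pos[of "(z - x j) + t *\<^sub>R w"]
          unfolding exp2 A_def nsq by (simp add: scL scR ww power2_eq_square algebra_simps)
      qed
      finally show ?thesis using False A0 unfolding A_def by (simp add: field_simps power2_eq_square)
    qed
    have "(\<Sum>j\<in>{1..k}. norm (z - x j)) \<le> (\<Sum>j\<in>{1..k}. norm (z + t *\<^sub>R w - x j))"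
      using med unfolding is_geometric_median_def by blast
    also have "\<dots> \<le> (\<Sum>j\<in>{1..k}. norm (z - x j) +
       (t * (if r < norm (x j - mu) then dd else ip (z - x j) w / norm (z - x j))
        + t\<^sup>2 * (if r < norm (x j - mu) then 0 else dd\<^sup>2 / (2 * norm (z - x j)))))"
      by (rule sum_mono) (rule pt)
    finally show ?thesis unfolding S1_def S2_def by (simp add: sum.distrib sum_distrib_left)
  qed
  have S1nn: "S1 \<ge> 0"
  proof (rule ccontr)
    assume "\<not> S1 \<ge> 0"
    hence n: "S1 < 0" by simp
    define t where "t = - S1 / (2 * (S2 + 1))"
    have t0: "t > 0" unfolding t_def using n S2nn by (intro divide_pos_pos) auto
    have "0 \<le> t * S1 + t\<^sup>2 * S2" by (rule step[OF t0])
    also have "t * S1 + t\<^sup>2 * S2 = t * (S1 + t * S2)" by (simp add: power2_eq_square algebra_simps)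
    finally have "0 \<le> S1 + t * S2" using t0 by (simp add: zero_le_mult_iff)
    moreover have "t * S2 \<le> - S1 / 2"
    proof -
      have "t * S2 = - S1 * S2 / (2 * (S2 + 1))" by (simp add: t_def)
      also have "\<dots> \<le> - S1 * (S2 + 1) / (2 * (S2 + 1))" using n S2nn
        by (intro divide_right_mono mult_left_mono) auto
      also have "\<dots> = - S1 / 2" using S2nn by (subst nonzero_mult_divide_mult_cancel_right) auto
      finally show ?thesis .
    qed
    ultimately show False using n by linarith
  qed
  \<comment> \<open>angle bound for good points\<close>
  define q where "q = sqrt (dd\<^sup>2 - r\<^sup>2)"
  have good: "ip (z - x j) w / norm (z - x j) \<le> - q" if g: "\<not> r < norm (x j - mu)" for j
  proof -
    define v where "v = x j - mu"
    define s where "s = ip v w"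
    have vr: "ip v v \<le> r\<^sup>2" using g nsq[of v] unfolding v_def
      by (metis norm_ge_zero not_less power_mono)
    have a_eq: "z - x j = - (w + v)" by (simp add: v_def w_def)
    have A2: "(norm (z - x j))\<^sup>2 = dd\<^sup>2 + 2 * s + ip v v"
      unfolding nsq a_eq minL minR minus_minus exp2 using ww by (simp add: s_def sym[of w v])
    have ipa: "ip (z - x j) w = - (dd\<^sup>2 + s)" unfolding a_eq minL addL ww s_def by simp
    have sge: "s \<ge> - (dd\<^sup>2 + r\<^sup>2) / 2"
    proof -
      have "0 \<le> ip ((dd / r) *\<^sub>R v + (r / dd) *\<^sub>R w) ((dd / r) *\<^sub>R v + (r / dd) *\<^sub>R w)" by (rule pos)
      also have "\<dots> = (dd/r)\<^sup>2 * ip v v + 2 * s + r\<^sup>2"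
        unfolding exp2 using r dr ww by (simp add: scL scR s_def power2_eq_square field_simps)
      also have "(dd/r)\<^sup>2 * ip v v \<le> (dd/r)\<^sup>2 * r\<^sup>2" using vr by (simp add: mult_left_mono)
      also have "(dd/r)\<^sup>2 * r\<^sup>2 = dd\<^sup>2" using r by (simp add: power2_eq_square field_simps)
      finally show ?thesis by simp
    qed
    have pos1: "dd\<^sup>2 + s > 0"
    proof -
      have "r\<^sup>2 < dd\<^sup>2" using r dr by (simp add: power_strict_mono)
      moreover have "2 * s \<ge> - (dd\<^sup>2 + r\<^sup>2)" using sge by (simp add: field_simps)
      ultimately show ?thesis by linarith
    qed
    have A0: "norm (z - x j) > 0"
    proof -
      have "dd \<le> norm (z - x j) + norm (x j - mu)" unfolding dd_def
        using norm_triangle_ineq[of "z - x j" "x j - mu"] by simp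
      thus ?thesis using g dr by linarith
    qed
    have sq: "(dd\<^sup>2 - r\<^sup>2) * (norm (z - x j))\<^sup>2 \<le> (dd\<^sup>2 + s)\<^sup>2"
    proof -
      have "(dd\<^sup>2 + s)\<^sup>2 - (dd\<^sup>2 - r\<^sup>2) * (dd\<^sup>2 + 2 * s + ip v v) = (s + r\<^sup>2)\<^sup>2 + (r\<^sup>2 - ip v v) * (dd\<^sup>2 - r\<^sup>2)"
        by (simp add: power2_eq_square algebra_simps)
      moreover have "(r\<^sup>2 - ip v v) * (dd\<^sup>2 - r\<^sup>2) \<ge> 0"
        using vr r dr by (simp add: power_mono)
      ultimately show ?thesis unfolding A2 by (smt (verit) zero_le_power2)
    qed
    have "q * norm (z - x j) \<le> dd\<^sup>2 + s"
    proof -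
      have "q * norm (z - x j) = sqrt ((dd\<^sup>2 - r\<^sup>2) * (norm (z - x j))\<^sup>2)"
        unfolding q_def by (simp add: real_sqrt_mult)
      also have "\<dots> \<le> sqrt ((dd\<^sup>2 + s)\<^sup>2)" using sq by (rule real_sqrt_le_mono)
      also have "\<dots> = dd\<^sup>2 + s" using pos1 by simp
      finally show ?thesis .
    qed
    thus ?thesis using A0 unfolding ipa by (simp add: field_simps)
  qed
  have "S1 \<le> (\<Sum>j\<in>{1..k}. if r < norm (x j - mu) then dd else - q)"
    unfolding S1_def by (rule sum_mono) (auto intro: good)
  also have "\<dots> = B * dd + G * (- q)" unfolding B_def G_def by (simp add: sum_if_card)
  finally have key: "G * q \<le> B * dd" using S1nn by simp
  have B0: "B \<ge> 0" by (simp add: B_def)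
  have kpos: "real k > 0"
  proof (rule ccontr)
    assume "\<not> real k > 0"
    hence "k = 0" by simp
    thus False using Bk B0 by simp
  qed
  have "(1 - \<alpha>) * real k = real k - \<alpha> * real k" by (simp add: algebra_simps)
  hence Gk: "G > (1 - \<alpha>) * real k" using GB Bk by linarith
  have qb: "q > \<alpha> * dd / (1 - \<alpha>)"
  proof -
    have dpos: "dd > 0" using dr r by simp
    have "((1 - \<alpha>) * sqrt (1 / (1 - 2 * \<alpha>)) * r)\<^sup>2 < dd\<^sup>2"
      using d unfolding dd_def using C0 r by (intro power_strict_mono) auto
    moreover have "((1 - \<alpha>) * sqrt (1 / (1 - 2 * \<alpha>)) * r)\<^sup>2 = (1 - \<alpha>)\<^sup>2 * r\<^sup>2 / (1 - 2 * \<alpha>)"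
      using c by (simp add: power_mult_distrib)
    ultimately have "(1 - \<alpha>)\<^sup>2 * r\<^sup>2 / (1 - 2 * \<alpha>) < dd\<^sup>2" by simp
    hence i1: "(1 - \<alpha>)\<^sup>2 * r\<^sup>2 < dd\<^sup>2 * (1 - 2 * \<alpha>)"
      using c by (simp add: pos_divide_less_eq)
    have "(1 - \<alpha>)\<^sup>2 * (dd\<^sup>2 - r\<^sup>2) - (\<alpha> * dd)\<^sup>2 = dd\<^sup>2 * (1 - 2 * \<alpha>) - (1 - \<alpha>)\<^sup>2 * r\<^sup>2"
      by (simp add: power2_eq_square algebra_simps)
    hence "(\<alpha> * dd)\<^sup>2 < (1 - \<alpha>)\<^sup>2 * (dd\<^sup>2 - r\<^sup>2)" using i1 by linarith
    hence "sqrt ((\<alpha> * dd)\<^sup>2) < sqrt ((1 - \<alpha>)\<^sup>2 * (dd\<^sup>2 - r\<^sup>2))" by (rule real_sqrt_less_mono)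
    hence "\<alpha> * dd < (1 - \<alpha>) * q" using a dpos unfolding q_def by (simp add: real_sqrt_mult)
    thus ?thesis using a by (simp add: field_simps)
  qed
  have q0: "q \<ge> 0" unfolding q_def using r dr by (simp add: power_mono)
  have "G * q \<ge> (1 - \<alpha>) * real k * q" using Gk q0 by (simp add: mult_right_mono)
  moreover have "(1 - \<alpha>) * real k * q > (1 - \<alpha>) * real k * (\<alpha> * dd / (1 - \<alpha>))"
    using qb a kpos by (intro mult_strict_left_mono) auto
  moreover have "(1 - \<alpha>) * real k * (\<alpha> * dd / (1 - \<alpha>)) = \<alpha> * real k * dd" using a by simp
  moreover have "\<alpha> * real k * dd > B * dd" using Bk dr r by (simp add: mult_strict_right_mono)
  ultimately show False using key by linarith
qed


lemma psi_identity:
  assumes "0 < p" "p < \<alpha>" "\<alpha> < 1"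
  shows "- ln (\<alpha> * (1 - p) / (p * (1 - \<alpha>))) * \<alpha> + ln ((1 - p) / (1 - \<alpha>)) = - psi \<alpha> p"
proof -
  have a0: "\<alpha> > 0" "1 - p > 0" "1 - \<alpha> > 0" using assms by auto
  have e1: "ln (\<alpha> * (1 - p) / (p * (1 - \<alpha>))) = ln \<alpha> + ln (1 - p) - ln p - ln (1 - \<alpha>)"
    using a0 assms by (simp add: ln_div ln_mult)
  have e2: "ln ((1 - p) / (1 - \<alpha>)) = ln (1 - p) - ln (1 - \<alpha>)" using a0 by (simp add: ln_div)
  have e3: "psi \<alpha> p = (1 - \<alpha>) * (ln (1 - \<alpha>) - ln (1 - p)) + \<alpha> * (ln \<alpha> - ln p)"
    unfolding psi_def using a0 assms by (simp add: ln_div)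
  show ?thesis unfolding e1 e2 e3 by (simp add: algebra_simps)
qed

lemma chernoff:
  fixes M :: "'s measure" and X :: "nat \<Rightarrow> 's \<Rightarrow> 'a::real_normed_vector"
  assumes P: "prob_space M" and ind: "prob_space.indep_vars M (\<lambda>_. borel) X I" and fin: "finite I"
    and pa: "0 < p" "p < \<alpha>" "\<alpha> < 1"
    and bnd: "\<And>j. j \<in> I \<Longrightarrow> measure M {\<omega>\<in>space M. \<epsilon> < norm (X j \<omega> - mu)} \<le> p"
    and E: "E \<subseteq> {\<omega>\<in>space M. \<alpha> * real (card I) \<le> real (card {j\<in>I. \<epsilon> < norm (X j \<omega> - mu)})}"
  shows "measure M E \<le> exp (- real (card I) * psi \<alpha> p)"
proof -
  interpret prob_space M by (rule P)
  define f :: "'a \<Rightarrow> real" where "f v = (if \<epsilon> < norm (v - mu) then 1 else 0)" for v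
  define Y where "Y j \<omega> = f (X j \<omega>)" for j \<omega>
  have op: "open {v::'a. \<epsilon> < norm (v - mu)}" by (intro open_Collect_less continuous_intros)
  have feq: "f = indicator {v. \<epsilon> < norm (v - mu)}" by (auto simp: f_def indicator_def fun_eq_iff)
  have fm[measurable]: "f \<in> borel_measurable borel" unfolding feq
    by (rule borel_measurable_indicator[OF borel_open[OF op]])
  have Xm: "X j \<in> borel_measurable M" if "j \<in> I" for j
    using ind that unfolding indep_vars_def by auto
  have Ym: "Y j \<in> borel_measurable M" if "j \<in> I" for j
    unfolding Y_def using Xm[OF that] by measurable
  have indY: "indep_vars (\<lambda>_. borel) Y I"
    unfolding Y_def by (rule indep_vars_compose2[OF ind]) simp
  define l where "l = ln (\<alpha> * (1 - p) / (p * (1 - \<alpha>)))"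
  have r0: "\<alpha> * (1 - p) / (p * (1 - \<alpha>)) > 1"
  proof -
    have "p * (1 - \<alpha>) < \<alpha> * (1 - p)" using pa by (simp add: algebra_simps)
    moreover have "p * (1 - \<alpha>) > 0" using pa by simp
    ultimately show ?thesis by simp
  qed
  have l0: "l > 0" unfolding l_def using r0 by simp
  have el: "exp l = \<alpha> * (1 - p) / (p * (1 - \<alpha>))" unfolding l_def using r0 by simp
  define c where "c = exp l - 1"
  have c0: "c \<ge> 0" unfolding c_def using l0 by simp
  have ec: "ennreal (exp l) = 1 + ennreal c" using c0 ennreal_plus[of 1 c] by (simp add: c_def)
  have cp: "1 + c * p = (1 - p) / (1 - \<alpha>)"
    unfolding c_def el using pa by (simp add: field_simps)
  define n where "n = card I"
  define S where "S = {\<omega>\<in>space M. \<alpha> * real n \<le> (\<Sum>j\<in>I. Y j \<omega>)}"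
  have Seq: "{\<omega>\<in>space M. \<alpha> * real (card I) \<le> real (card {j\<in>I. \<epsilon> < norm (X j \<omega> - mu)})} = S"
    unfolding S_def Y_def f_def n_def using fin
    by (auto simp: sum_if_card)
  have sm: "(\<lambda>\<omega>. (\<Sum>j\<in>I. Y j \<omega>) * indicator (space M) \<omega>) \<in> borel_measurable M"
    using Ym by (intro borel_measurable_times borel_measurable_sum) auto
  have "emeasure M S \<le> ennreal (exp (-l * (\<alpha> * real n))) *
          nn_integral M (\<lambda>x. ennreal (exp (l * (\<Sum>j\<in>I. Y j x))) * indicator (space M) x)"
    unfolding S_def by (rule Chernoff_ineq_nn_integral_ge[OF l0 sets.top sm])
  also have "nn_integral M (\<lambda>x. ennreal (exp (l * (\<Sum>j\<in>I. Y j x))) * indicator (space M) x)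
      = (\<integral>\<^sup>+x. (\<Prod>j\<in>I. ennreal (exp (l * Y j x))) \<partial>M)"
    by (intro nn_integral_cong)
       (simp_all add: sum_distrib_left exp_sum fin prod_ennreal)
  also have "\<dots> = (\<Prod>j\<in>I. \<integral>\<^sup>+x. ennreal (exp (l * Y j x)) \<partial>M)"
    by (intro indep_vars_nn_integral fin indep_vars_compose2[OF indY]) auto
  also have "\<dots> \<le> (\<Prod>j\<in>I. ennreal (1 + c * p))"
  proof (intro prod_mono_ennreal)
    fix j assume j: "j \<in> I"
    define A where "A = {\<omega>\<in>space M. \<epsilon> < norm (X j \<omega> - mu)}"
    have "A = X j -` {v. \<epsilon> < norm (v - mu)} \<inter> space M" unfolding A_def by auto
    hence Am: "A \<in> sets M" using measurable_sets[OF Xm[OF j] borel_open[OF op]] by simp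
    have "(\<integral>\<^sup>+x. ennreal (exp (l * Y j x)) \<partial>M) = (\<integral>\<^sup>+x. (1 + ennreal c * indicator A x) \<partial>M)"
    proof (intro nn_integral_cong)
      fix x assume "x \<in> space M"
      thus "ennreal (exp (l * Y j x)) = 1 + ennreal c * indicator A x"
        using ec unfolding Y_def f_def A_def by auto
    qed
    also have "\<dots> = (\<integral>\<^sup>+x. 1 \<partial>M) + (\<integral>\<^sup>+x. ennreal c * indicator A x \<partial>M)"
      using Am by (intro nn_integral_add) auto
    also have "\<dots> = 1 + ennreal c * emeasure M A"
      using Am by (simp add: nn_integral_cmult_indicator emeasure_space_1)
    also have "\<dots> = ennreal (1 + c * measure M A)"
    proof -
      have e1: "ennreal (1 + c * measure M A) = ennreal 1 + ennreal (c * measure M A)"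
        by (rule ennreal_plus) (use c0 in auto)
      have e2: "ennreal (c * measure M A) = ennreal c * ennreal (measure M A)"
        by (rule ennreal_mult) (use c0 in auto)
      show ?thesis unfolding e1 e2 by (simp add: emeasure_eq_measure)
    qed
    also have "\<dots> \<le> ennreal (1 + c * p)"
      using bnd[OF j] c0 unfolding A_def by (intro ennreal_leI add_left_mono mult_left_mono) auto
    finally show "(\<integral>\<^sup>+x. ennreal (exp (l * Y j x)) \<partial>M) \<le> ennreal (1 + c * p)" .
  qed
  also have "(\<Prod>j\<in>I. ennreal (1 + c * p)) = ennreal ((1 + c * p) ^ n)"
    unfolding prod_constant n_def by (rule ennreal_power) (use c0 pa in auto)
  finally have "emeasure M S \<le> ennreal (exp (-l * (\<alpha> * real n))) * ennreal ((1 + c * p) ^ n)"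
    by (metis mult_left_mono zero_le)
  also have "ennreal (exp (-l * (\<alpha> * real n))) * ennreal ((1 + c * p) ^ n) = ennreal (exp (-l * (\<alpha> * real n)) * ((1 + c * p) ^ n))"
    by (rule ennreal_mult[symmetric]) (use c0 pa in auto)
  also have "exp (-l * (\<alpha> * real n)) * ((1 + c * p) ^ n) = exp (- real n * psi \<alpha> p)"
  proof -
    have q0: "(1 - p) / (1 - \<alpha>) > 0" using pa by simp
    have "((1 + c * p) ^ n) = exp (real n * ln ((1 - p) / (1 - \<alpha>)))"
      unfolding cp using q0 by (simp add: exp_of_nat_mult)
    hence "exp (-l * (\<alpha> * real n)) * ((1 + c * p) ^ n)
        = exp (real n * (- l * \<alpha> + ln ((1 - p) / (1 - \<alpha>))))"
      by (simp add: exp_add[symmetric] algebra_simps)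
    also have "- l * \<alpha> + ln ((1 - p) / (1 - \<alpha>)) = - psi \<alpha> p"
      unfolding l_def using psi_identity[OF pa] by simp
    finally show ?thesis by simp
  qed
  finally have "emeasure M S \<le> ennreal (exp (- real n * psi \<alpha> p))" .
  hence "measure M S \<le> exp (- real n * psi \<alpha> p)"
    by (simp add: emeasure_eq_measure)
  moreover have sY[measurable]: "(\<lambda>\<omega>. \<Sum>j\<in>I. Y j \<omega>) \<in> borel_measurable M"
    using Ym by (intro borel_measurable_sum) auto
  have Sm: "S \<in> sets M" unfolding S_def by measurable
  have "measure M E \<le> measure M S" using E Seq Sm by (intro finite_measure_mono) auto
  ultimately show ?thesis by (simp add: n_def)
qed

theorem theorem3p1:
  fixes M :: "'s measure"
    and X :: "nat \<Rightarrow> 's \<Rightarrow> 'a::banach"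
    and mu :: 'a
    and muhat :: "'s \<Rightarrow> 'a"
    and k :: nat
    and \<alpha> p \<epsilon> :: real
  assumes "prob_space M"
    and "separable_space (euclidean :: 'a topology)"
    and "reflexive_space TYPE('a)"
    and "\<And>j. j \<in> {1..k} \<Longrightarrow> X j \<in> borel_measurable M"
    and "prob_space.indep_vars M (\<lambda>_. borel) X {1..k}"
    and "0 < \<alpha>" and "\<alpha> < 1/2"
    and "0 < p" and "p < \<alpha>"
    and "0 < \<epsilon>"
    and "\<And>j. j \<in> {1..k} \<Longrightarrow> measure M {\<omega> \<in> space M. norm (X j \<omega> - mu) > \<epsilon>} \<le> p"
    and "muhat \<in> borel_measurable M"
    and "\<And>\<omega>. \<omega> \<in> space M \<Longrightarrow> is_geometric_median k (\<lambda>j. X j \<omega>) (muhat \<omega>)"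
  shows "measure M {\<omega> \<in> space M. norm (muhat \<omega> - mu) > (2 * (1 - \<alpha>) / (1 - 2 * \<alpha>)) * \<epsilon>}
           \<le> exp (- real k * psi \<alpha> p)
         \<and> (hilbert_norm TYPE('a) \<longrightarrow>
         measure M {\<omega> \<in> space M. norm (muhat \<omega> - mu) > ((1 - \<alpha>) * sqrt (1 / (1 - 2 * \<alpha>))) * \<epsilon>}
           \<le> exp (- real k * psi \<alpha> p))"
proof -
  have ck: "card {1..k} = k" by simp
  have pa: "0 < p" "p < \<alpha>" "\<alpha> < 1" using assms by auto
  have bnd: "\<And>j. j \<in> {1..k} \<Longrightarrow> measure M {\<omega>\<in>space M. \<epsilon> < norm (X j \<omega> - mu)} \<le> p"
    using assms(11) by simp
  have part1: "measure M {\<omega> \<in> space M. norm (muhat \<omega> - mu) > (2 * (1 - \<alpha>) / (1 - 2 * \<alpha>)) * \<epsilon>}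
           \<le> exp (- real k * psi \<alpha> p)"
  proof -
    have "measure M {\<omega> \<in> space M. norm (muhat \<omega> - mu) > (2 * (1 - \<alpha>) / (1 - 2 * \<alpha>)) * \<epsilon>}
           \<le> exp (- real (card {1..k}) * psi \<alpha> p)"
    proof (rule chernoff[OF assms(1) assms(5) _ pa bnd])
      show "{\<omega> \<in> space M. norm (muhat \<omega> - mu) > (2 * (1 - \<alpha>) / (1 - 2 * \<alpha>)) * \<epsilon>}
         \<subseteq> {\<omega> \<in> space M. \<alpha> * real (card {1..k}) \<le> real (card {j \<in> {1..k}. \<epsilon> < norm (X j \<omega> - mu)})}"
        using geo_general[OF assms(13) assms(10) assms(6) assms(7)] ck by auto
    qed auto
    thus ?thesis by simp
  qed
  have part2: "measure M {\<omega> \<in> space M. norm (muhat \<omega> - mu) > ((1 - \<alpha>) * sqrt (1 / (1 - 2 * \<alpha>))) * \<epsilon>}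
           \<le> exp (- real k * psi \<alpha> p)" if H: "hilbert_norm TYPE('a)"
  proof -
    have "measure M {\<omega> \<in> space M. norm (muhat \<omega> - mu) > ((1 - \<alpha>) * sqrt (1 / (1 - 2 * \<alpha>))) * \<epsilon>}
           \<le> exp (- real (card {1..k}) * psi \<alpha> p)"
    proof (rule chernoff[OF assms(1) assms(5) _ pa bnd])
      show "{\<omega> \<in> space M. norm (muhat \<omega> - mu) > ((1 - \<alpha>) * sqrt (1 / (1 - 2 * \<alpha>))) * \<epsilon>}
         \<subseteq> {\<omega> \<in> space M. \<alpha> * real (card {1..k}) \<le> real (card {j \<in> {1..k}. \<epsilon> < norm (X j \<omega> - mu)})}"
        using geo_hilbert[OF H assms(13) assms(10) assms(6) assms(7)] ck by auto
    qed auto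
    thus ?thesis by simp
  qed
  show ?thesis using part1 part2 by blast
qed

end
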